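(* Let $S$ be a set of $n$ points in $\mathbb{R}^D$, let $t\geqslant 1$ be a real number, let $G$ be a $t$-spanner for $S$, and let $T$ be a minimum spanning tree of $G$. Let $m$ be an integer with $1\leqslant m\leqslant n-1$, and let $T'$ and $T''$ be two vertex-disjoint subtrees (connected subgraphs) of $T$, each consisting of at most $m$ vertices. Let $p$ be a vertex of $T'$, let $q$ be a vertex of $T''$, and let $\gamma$ be the path in $T$ between $p$ and $q$. If $x$ is a vertex of $T'$ lying on the subpath of $\gamma$ within $T'$, and $y$ is a vertex of $T''$ lying on the subpath of $\gamma$ within $T''$, then $$d(x,y)\leqslant \big(2t(m-1)+1\big)\cdot d(p,q).$$
   Context: $d(u,v)$ denotes Euclidean distance. For a graph $G$ with vertex set $S\subset\mathbb{R}^D$, each edge $(u,v)$ has weight (length) $d(u,v)$ and $d_G(u,v)$ is the length of a shortest path in $G$ between $u$ and $v$. $G$ is a $t$-spanner for $S$ if its vertex set is $S$ and $d_G(u,v)\leqslant t\cdot d(u,v)$ for all $u,v\in S$. A minimum spanning tree of $G$ is a spanning tree of $G$ (using only edges of $G$) of minimum total edge weight. *)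

theory Defs
  imports "HOL-Analysis.Analysis"
begin

text \<open>Geometric graphs: vertex set S (points of a Euclidean space), edge set E given as a
  symmetric irreflexive relation on S; the edge (u,v) has weight dist u v.\<close>

definition geom_graph :: "'a::euclidean_space set \<Rightarrow> ('a \<times> 'a) set \<Rightarrow> bool" where
  "geom_graph S E \<longleftrightarrow> E \<subseteq> S \<times> S \<and> sym E \<and> (\<forall>u. (u,u) \<notin> E)"

definition walk :: "('a \<times> 'a) set \<Rightarrow> 'a list \<Rightarrow> 'a \<Rightarrow> 'a \<Rightarrow> bool" where
  "walk E xs u v \<longleftrightarrow> xs \<noteq> [] \<and> hd xs = u \<and> last xs = v \<and> set (zip xs (tl xs)) \<subseteq> E"

definition walk_length :: "'a::euclidean_space list \<Rightarrow> real" where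
  "walk_length xs = (\<Sum>i<length xs - 1. dist (xs ! i) (xs ! Suc i))"

definition graph_dist :: "('a::euclidean_space \<times> 'a) set \<Rightarrow> 'a \<Rightarrow> 'a \<Rightarrow> real" where
  "graph_dist E u v = Inf {walk_length xs | xs. walk E xs u v}"

text \<open>t-spanner: d_G(u,v) \<le> t d(u,v) for all u,v in S (with d_G = infinity if disconnected,
  hence connectivity is required).\<close>
definition t_spanner :: "real \<Rightarrow> 'a::euclidean_space set \<Rightarrow> ('a \<times> 'a) set \<Rightarrow> bool" where
  "t_spanner t S E \<longleftrightarrow> geom_graph S E \<and>
     (\<forall>u\<in>S. \<forall>v\<in>S. (\<exists>xs. walk E xs u v) \<and> graph_dist E u v \<le> t * dist u v)"

definition connected_on :: "'a set \<Rightarrow> ('a \<times> 'a) set \<Rightarrow> bool" where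
  "connected_on V E \<longleftrightarrow> (\<forall>u\<in>V. \<forall>v\<in>V. \<exists>xs. walk E xs u v \<and> set xs \<subseteq> V)"

definition has_cycle :: "('a \<times> 'a) set \<Rightarrow> bool" where
  "has_cycle E \<longleftrightarrow> (\<exists>xs. length xs \<ge> 3 \<and> distinct xs \<and> set (zip xs (tl xs)) \<subseteq> E
                        \<and> (last xs, hd xs) \<in> E)"

definition spanning_tree :: "'a set \<Rightarrow> ('a \<times> 'a) set \<Rightarrow> ('a \<times> 'a) set \<Rightarrow> bool" where
  "spanning_tree S E T \<longleftrightarrow> T \<subseteq> E \<and> sym T \<and> connected_on S T \<and> \<not> has_cycle T"

text \<open>Total weight of an undirected graph given as a symmetric relation (each edge counted twice).\<close>
definition total_weight :: "('a::euclidean_space \<times> 'a) set \<Rightarrow> real" where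
  "total_weight T = (\<Sum>(u,v)\<in>T. dist u v) / 2"

definition minimum_spanning_tree :: "'a::euclidean_space set \<Rightarrow> ('a \<times> 'a) set \<Rightarrow> ('a \<times> 'a) set \<Rightarrow> bool" where
  "minimum_spanning_tree S E T \<longleftrightarrow> spanning_tree S E T \<and>
     (\<forall>T'. spanning_tree S E T' \<longrightarrow> total_weight T \<le> total_weight T')"

definition subtree_of :: "('a \<times> 'a) set \<Rightarrow> 'a set \<Rightarrow> ('a \<times> 'a) set \<Rightarrow> bool" where
  "subtree_of T V E' \<longleftrightarrow> E' \<subseteq> T \<and> E' \<subseteq> V \<times> V \<and> sym E' \<and> connected_on V E'"

definition path_in :: "('a \<times> 'a) set \<Rightarrow> 'a list \<Rightarrow> 'a \<Rightarrow> 'a \<Rightarrow> bool" where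
  "path_in E xs u v \<longleftrightarrow> walk E xs u v \<and> distinct xs"

end

theory Submission
  imports Defs
begin

definition prs :: "'a list \<Rightarrow> ('a \<times> 'a) list" where "prs xs = zip xs (tl xs)"

lemma prs_simps[simp]: "prs [] = []" "prs [x] = []" "prs (x#y#zs) = (x,y) # prs (y#zs)"
  by (auto simp: prs_def)

lemma prs_Cons: "prs (x#xs) = (if xs = [] then [] else (x, hd xs) # prs xs)"
  by (cases xs) auto

lemma prs_append: "prs (xs @ y # ys) = prs (xs @ [y]) @ prs (y # ys)"
  by (induction xs rule: induct_list012) auto

lemma prs_snoc: "xs \<noteq> [] \<Longrightarrow> prs (xs @ [z]) = prs xs @ [(last xs, z)]"
  by (induction xs rule: induct_list012) auto

lemma prs_nth: "(a,b) \<in> set (prs xs) \<longleftrightarrow> (\<exists>i. Suc i < length xs \<and> a = xs!i \<and> b = xs!Suc i)"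
  unfolding prs_def by (auto simp: set_zip nth_tl) (metis Suc_lessD less_diff_conv add_Suc_right add_0_right)

lemma prs_decomp: "(a,b) \<in> set (prs xs) \<Longrightarrow> \<exists>ys zs. xs = ys @ a # b # zs"
proof (induction xs rule: induct_list012)
  case (3 x y zs)
  then show ?case by (auto intro: exI[of _ "[]"]) (metis append_Cons)
qed auto

lemma walk_prs: "walk E xs u v \<longleftrightarrow> xs \<noteq> [] \<and> hd xs = u \<and> last xs = v \<and> set (prs xs) \<subseteq> E"
  by (simp add: walk_def prs_def)

lemma prs_rtrancl: "set (prs xs) \<subseteq> E \<Longrightarrow> z \<in> set xs \<Longrightarrow> (hd xs, z) \<in> E\<^sup>*"
proof (induction xs rule: induct_list012)
  case (3 x y zs)
  then show ?case
    by simp (metis converse_rtrancl_into_rtrancl list.sel(1) rtrancl.rtrancl_refl)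
qed auto

lemma walk_rtrancl: "walk E xs u v \<Longrightarrow> (u,v) \<in> E\<^sup>*"
  unfolding walk_prs using prs_rtrancl[of xs E "last xs"] by auto

lemma rtrancl_walk: "(u,v) \<in> E\<^sup>* \<Longrightarrow> \<exists>xs. walk E xs u v \<and> set xs \<subseteq> insert u (snd ` E)"
proof (induction rule: rtrancl_induct)
  case base
  then show ?case by (auto simp: walk_prs intro: exI[of _ "[u]"])
next
  case (step y z)
  then obtain xs where "walk E xs u y" "set xs \<subseteq> insert u (snd ` E)" by blast
  moreover have S: "set (xs @ [z]) \<subseteq> insert u (snd ` E)"
  proof -
    have "z \<in> snd ` E" using step(2) by force
    then show ?thesis using calculation by auto
  qed
  moreover have "walk E (xs @ [z]) u z" using calculation step(2) by (auto simp: walk_prs prs_snoc)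
  ultimately show ?case by blast
qed

lemma walk_distinct: "walk E xs u v \<Longrightarrow> \<exists>ys. walk E ys u v \<and> distinct ys \<and> set ys \<subseteq> set xs"
proof (induction xs rule: length_induct)
  case (1 xs)
  show ?case
  proof (cases "distinct xs")
    case True then show ?thesis using 1 by blast
  next
    case False
    then obtain as bs cs w where xs: "xs = as @ [w] @ bs @ [w] @ cs" using not_distinct_decomp by blast
    let ?ys = "as @ w # cs"
    have "set (prs ?ys) \<subseteq> set (prs xs)"
      using prs_append[of as w cs] prs_append[of as w "bs @ w # cs"] prs_append[of "w # bs" w cs]
      by (auto simp: xs)
    moreover have "hd ?ys = hd xs" by (cases as) (auto simp: xs)
    moreover have "last ?ys = last xs" by (cases cs) (auto simp: xs)
    ultimately have "walk E ?ys u v" using 1(2) by (auto simp: walk_prs)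
    moreover have "length ?ys < length xs" by (simp add: xs)
    ultimately obtain zs where "walk E zs u v \<and> distinct zs \<and> set zs \<subseteq> set ?ys" using 1(1) by blast
    then show ?thesis by (auto simp: xs)
  qed
qed

lemma conn_iff: "E \<subseteq> S \<times> S \<Longrightarrow> connected_on S E \<longleftrightarrow> (\<forall>u\<in>S. \<forall>v\<in>S. (u,v) \<in> E\<^sup>*)"
proof
  assume "connected_on S E" then show "\<forall>u\<in>S. \<forall>v\<in>S. (u,v) \<in> E\<^sup>*"
    unfolding connected_on_def using walk_rtrancl by metis
next
  assume E: "E \<subseteq> S \<times> S" and H: "\<forall>u\<in>S. \<forall>v\<in>S. (u,v) \<in> E\<^sup>*"
  show "connected_on S E" unfolding connected_on_def
  proof (intro ballI)
    fix u v assume "u \<in> S" "v \<in> S"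
    then obtain xs where "walk E xs u v" "set xs \<subseteq> insert u (snd ` E)" using H rtrancl_walk by metis
    moreover have "insert u (snd ` E) \<subseteq> S" using E \<open>u \<in> S\<close> by auto
    ultimately show "\<exists>xs. walk E xs u v \<and> set xs \<subseteq> S" by blast
  qed
qed

lemma sym_rt: "sym E \<Longrightarrow> (x,y) \<in> E\<^sup>* \<Longrightarrow> (y,x) \<in> E\<^sup>*"
  using sym_rtrancl by (metis symD)

lemma sym_minus: "sym T \<Longrightarrow> sym (T - {(a,b),(b,a)})"
  unfolding sym_def by blast

lemma cyc:
  assumes "sym T" "(a,b) \<in> T" "a \<noteq> b" "(a,b) \<in> (T - {(a,b),(b,a)})\<^sup>*"
  shows "has_cycle T"
proof -
  let ?T0 = "T - {(a,b),(b,a)}"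
  obtain xs0 where "walk ?T0 xs0 a b" using rtrancl_walk assms(4) by metis
  then obtain xs where w: "walk ?T0 xs a b" and d: "distinct xs" using walk_distinct by metis
  have "length xs \<ge> 3"
  proof (rule ccontr)
    assume "\<not> length xs \<ge> 3"
    then have "length xs = 0 \<or> length xs = 1 \<or> length xs = 2" by linarith
    then show False
    proof (elim disjE)
      assume "length xs = 2"
      then obtain c d where "xs = [c,d]"
        by (metis (no_types, lifting) One_nat_def Suc_1 length_0_conv length_Suc_conv)
      then show False using w by (auto simp: walk_prs)
    next
      assume "length xs = 1"
      then obtain c where "xs = [c]" by (metis One_nat_def length_0_conv length_Suc_conv)
      then show False using w assms(3) by (auto simp: walk_prs)
    next
      assume "length xs = 0" then show False using w by (simp add: walk_prs)
    qed
  qed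
  moreover have "set (zip xs (tl xs)) \<subseteq> T" using w by (auto simp: walk_def)
  moreover have "(last xs, hd xs) \<in> T" using w assms(1,2) by (auto simp: walk_def sym_def)
  ultimately show ?thesis unfolding has_cycle_def using d by blast
qed

lemma prs_sub: "set (prs (xs @ [y])) \<subseteq> set (prs (xs @ y # ys))" "set (prs (y # ys)) \<subseteq> set (prs (xs @ y # ys))"
  using prs_append[of xs y ys] by auto

lemma prs_avoid: "(c,d) \<in> set (prs xs) \<Longrightarrow> c \<in> set xs \<and> d \<in> set xs"
  by (auto simp: prs_nth)

lemma keyL:
  assumes "sym T" "\<not> has_cycle T" "distinct xs" "set (prs xs) \<subseteq> T" "xs \<noteq> []" "(a,b) \<in> set (prs xs)"
  shows "(hd xs, last xs) \<notin> (T - {(a,b),(b,a)})\<^sup>*"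
proof
  let ?T0 = "T - {(a,b),(b,a)}"
  assume H: "(hd xs, last xs) \<in> ?T0\<^sup>*"
  obtain ys zs where xs: "xs = ys @ a # b # zs" using prs_decomp[OF assms(6)] by blast
  have ab1: "a \<noteq> b" using assms(3) xs by simp
  have ab2: "(a,b) \<in> T" using assms(4,6) by blast
  have "set (prs (ys @ [a])) \<subseteq> ?T0"
  proof
    fix e assume e: "e \<in> set (prs (ys @ [a]))"
    then have "e \<in> T" using prs_sub(1)[where xs=ys and y=a and ys="b # zs"] assms(4) xs by auto
    moreover have "b \<notin> set (ys @ [a])" using assms(3) xs by auto
    moreover obtain c d where "e = (c,d)" by (cases e)
    ultimately show "e \<in> ?T0" using e prs_avoid[of c d "ys @ [a]"] by auto
  qed
  moreover have "hd (ys @ [a]) = hd xs" using xs by (cases ys) simp_all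
  ultimately have 1: "(hd xs, a) \<in> ?T0\<^sup>*" using prs_rtrancl[of "ys @ [a]" ?T0 a] by simp
  have "set (prs (b # zs)) \<subseteq> ?T0"
  proof
    fix e assume e: "e \<in> set (prs (b # zs))"
    then have "e \<in> T" using prs_sub(2)[where xs="ys @ [a]" and y=b and ys=zs] assms(4) xs by auto
    moreover have "a \<notin> set (b # zs)" using assms(3) xs by auto
    moreover obtain c d where "e = (c,d)" by (cases e)
    ultimately show "e \<in> ?T0" using e prs_avoid[of c d "b # zs"] by auto
  qed
  moreover have "last xs \<in> set (b # zs)" using xs by simp
  ultimately have 2: "(b, last xs) \<in> ?T0\<^sup>*" using prs_rtrancl[of "b # zs" ?T0 "last xs"] by simp
  have s: "sym ?T0" using assms(1) by (rule sym_minus)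
  have "(a,b) \<in> ?T0\<^sup>*"
    using rtrancl_trans[OF rtrancl_trans[OF sym_rt[OF s 1] H] sym_rt[OF s 2]] .
  then show False using cyc[OF assms(1) ab2 ab1] assms(2) by blast
qed

lemma wl_Cons: "walk_length (a # b # xs) = dist a b + walk_length (b # xs)"
  unfolding walk_length_def
  apply (simp only: length_Cons diff_Suc_1)
  apply (subst sum.lessThan_Suc_shift)
  apply simp
  done

lemma wl_nonneg: "walk_length xs \<ge> 0"
  unfolding walk_length_def by (simp add: sum_nonneg)

lemma dist_le_wl: "xs \<noteq> [] \<Longrightarrow> dist (hd xs) (last xs) \<le> walk_length xs"
proof (induction xs rule: induct_list012)
  case (3 x y zs)
  have "dist x (last (y # zs)) \<le> dist x y + dist y (last (y # zs))" by (rule dist_triangle)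
  moreover have "dist y (last (y # zs)) \<le> walk_length (y # zs)" using 3(2) by simp
  ultimately show ?case by (simp add: wl_Cons)
qed (auto simp: walk_length_def)

lemma pair_le_wl: "(c,d) \<in> set (prs xs) \<Longrightarrow> dist c d \<le> walk_length xs"
proof -
  assume "(c,d) \<in> set (prs xs)"
  then obtain i where i: "Suc i < length xs" "c = xs!i" "d = xs!Suc i" by (auto simp: prs_nth)
  have "i \<in> {..<length xs - 1}" using i by auto
  then show ?thesis unfolding walk_length_def i
    by (rule member_le_sum[where f = "\<lambda>i. dist (xs!i) (xs!Suc i)"]) auto
qed

lemma wl_bound: "(\<And>c d. (c,d) \<in> set (prs xs) \<Longrightarrow> dist c d \<le> M) \<Longrightarrow> walk_length xs \<le> real (length xs - 1) * M"
proof -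
  assume H: "\<And>c d. (c,d) \<in> set (prs xs) \<Longrightarrow> dist c d \<le> M"
  have "walk_length xs \<le> (\<Sum>i<length xs - 1. M)" unfolding walk_length_def
  proof (rule sum_mono)
    fix i assume "i \<in> {..<length xs - 1}"
    then show "dist (xs!i) (xs!Suc i) \<le> M" by (intro H) (auto simp: prs_nth intro!: exI[of _ i])
  qed
  then show ?thesis by simp
qed

lemma cross: "xs \<noteq> [] \<Longrightarrow> P (hd xs) \<Longrightarrow> \<not> P (last xs) \<Longrightarrow> \<exists>c d. (c,d) \<in> set (prs xs) \<and> P c \<and> \<not> P d"
proof (induction xs rule: induct_list012)
  case (3 x y zs)
  then show ?case by (cases "P y") auto
qed auto

lemma exists_st:
  assumes fin: "finite H" and HG: "H \<subseteq> G" and HS: "H \<subseteq> S \<times> S" and sH: "sym H" and cH: "connected_on S H"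
  shows "\<exists>H'. H' \<subseteq> H \<and> spanning_tree S G H'"
proof -
  let ?P = "\<lambda>H'. H' \<subseteq> H \<and> sym H' \<and> connected_on S H'"
  have "?P H" using sH cH by blast
  then have "\<exists>x. ?P x \<and> (\<forall>y. ?P y \<longrightarrow> card x \<le> card y)" by (rule ex_has_least_nat)
  then obtain H' where PH: "?P H' \<and> (\<forall>y. ?P y \<longrightarrow> card H' \<le> card y)" ..
  have P: "?P H'" using PH by (rule conjunct1)
  have min0: "\<forall>y. ?P y \<longrightarrow> card H' \<le> card y" using PH by (rule conjunct2)
  note min = min0[rule_format]
  have "\<not> has_cycle H'"
  proof
    assume "has_cycle H'"
    then obtain xs where len: "length xs \<ge> 3" and dxs: "distinct xs" and pz: "set (prs xs) \<subseteq> H'"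
      and lh: "(last xs, hd xs) \<in> H'" unfolding has_cycle_def by (elim exE conjE) (rule that; simp add: prs_def)
    define a where "a = last xs"
    define b where "b = hd xs"
    let ?H = "H' - {(a,b),(b,a)}"
    have pz2: "set (prs xs) \<subseteq> ?H"
    proof
      fix e assume e: "e \<in> set (prs xs)"
      obtain c d where cd: "e = (c,d)" by (cases e)
      from e cd have "\<exists>i. Suc i < length xs \<and> c = xs!i \<and> d = xs!Suc i" by (simp add: prs_nth)
      then obtain i where i: "Suc i < length xs" "e = (xs!i, xs!Suc i)" using cd by blast
      have ne: "xs \<noteq> []" using len by auto
      have a: "a = xs ! (length xs - 1)" unfolding a_def using ne by (simp add: last_conv_nth)
      have b: "b = xs ! 0" unfolding b_def using ne by (simp add: hd_conv_nth)
      have "xs!i \<noteq> a" unfolding a using i dxs by (simp add: nth_eq_iff_index_eq)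
      moreover have "xs!i = b \<longrightarrow> xs!Suc i \<noteq> a"
      proof
        assume "xs!i = b"
        then have "i = 0" unfolding b using i dxs nth_eq_iff_index_eq[OF dxs, of i 0] ne by simp
        then show "xs!Suc i \<noteq> a" unfolding a using i dxs len by (simp add: nth_eq_iff_index_eq)
      qed
      moreover have "e \<in> H'" using subsetD[OF pz e] .
      ultimately show "e \<in> ?H" using i(2) by auto
    qed
    have ne: "xs \<noteq> []" using len by auto
    have s: "sym ?H" using P by (simp add: sym_minus)
    have hb: "hd xs = b" by (simp add: b_def)
    have la: "last xs = a" by (simp add: a_def)
    have w: "walk ?H xs b a" unfolding walk_prs using pz2 ne hb la by simp
    have ba: "(b, a) \<in> ?H\<^sup>*" using w by (rule walk_rtrancl)
    have ab: "(a, b) \<in> ?H\<^sup>*" using sym_rt[OF s ba] .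
    have "H' \<subseteq> ?H\<^sup>*"
    proof
      fix e assume e: "e \<in> H'"
      show "e \<in> ?H\<^sup>*"
      proof (cases "e \<in> ?H")
        case True then show ?thesis by (rule r_into_rtrancl)
      next
        case False
        then have "e = (a,b) \<or> e = (b,a)" using e by blast
        then show ?thesis using ab ba by blast
      qed
    qed
    then have sub: "H'\<^sup>* \<subseteq> ?H\<^sup>*" by (rule rtrancl_subset_rtrancl)
    have HS': "H' \<subseteq> S \<times> S" using P HS by blast
    have c1: "\<forall>u\<in>S. \<forall>v\<in>S. (u,v) \<in> H'\<^sup>*" using conn_iff[OF HS'] P by blast
    have c2: "\<forall>u\<in>S. \<forall>v\<in>S. (u,v) \<in> ?H\<^sup>*" using c1 sub by blast
    have HS2: "?H \<subseteq> S \<times> S" using HS' by blast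
    have "connected_on S ?H" using conn_iff[OF HS2] c2 by blast
    moreover have "?H \<subseteq> H" using P by auto
    ultimately have "?P ?H" using s by simp
    then have le: "card H' \<le> card ?H" by (rule min)
    have fH: "finite H'" by (rule finite_subset[OF _ fin]) (use P in simp)
    have "(a,b) \<in> H'" using lh a_def b_def by simp
    then have "?H \<subset> H'" by blast
    then have "card ?H < card H'" by (rule psubset_card_mono[OF fH])
    then show False using le by linarith
  qed
  moreover have "H' \<subseteq> G" using P HG by blast
  ultimately show ?thesis using P unfolding spanning_tree_def by blast
qed

lemma reachR:
  assumes "(u,z) \<in> T\<^sup>*"
  shows "(u,z) \<in> (T - {(a,b),(b,a)})\<^sup>* \<or> (a,z) \<in> (T - {(a,b),(b,a)})\<^sup>* \<or> (b,z) \<in> (T - {(a,b),(b,a)})\<^sup>*"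
  using assms
proof (induction rule: rtrancl_induct)
  case base then show ?case by simp
next
  case (step y z)
  show ?case
  proof (cases "(y,z) \<in> T - {(a,b),(b,a)}")
    case True
    then show ?thesis using step(3) by (meson rtrancl_into_rtrancl)
  next
    case False
    then have "z = a \<or> z = b" using step(2) by blast
    then show ?thesis by auto
  qed
qed

lemma cut:
  fixes S :: "'a::euclidean_space set"
  assumes fin: "finite S" and sp: "t_spanner t S G" and mst: "minimum_spanning_tree S G T"
    and abT: "(a,b) \<in> T" and pS: "p \<in> S" and qS: "q \<in> S"
    and np: "(p,q) \<notin> (T - {(a,b),(b,a)})\<^sup>*"
  shows "dist a b \<le> t * dist p q"
proof (rule ccontr)
  assume "\<not> ?thesis" then have lt: "t * dist p q < dist a b" by simp
  from sp have gg: "geom_graph S G"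
    and sp2: "\<forall>u\<in>S. \<forall>v\<in>S. (\<exists>xs. walk G xs u v) \<and> graph_dist G u v \<le> t * dist u v"
    unfolding t_spanner_def by auto
  from gg have GS: "G \<subseteq> S \<times> S" and sG: "sym G" and irr: "\<forall>u. (u,u) \<notin> G"
    unfolding geom_graph_def by auto
  from mst have st: "spanning_tree S G T"
    and minw: "\<forall>T'. spanning_tree S G T' \<longrightarrow> total_weight T \<le> total_weight T'"
    unfolding minimum_spanning_tree_def by auto
  from st have TG: "T \<subseteq> G" and sT: "sym T" and cT: "connected_on S T"
    unfolding spanning_tree_def by auto
  have TS: "T \<subseteq> S \<times> S" using TG GS by auto
  have cT': "\<forall>u\<in>S. \<forall>v\<in>S. (u,v) \<in> T\<^sup>*" using conn_iff[OF TS] cT by simp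
  define W where "W = {walk_length xs | xs. walk G xs p q}"
  have Wne: "W \<noteq> {}" using sp2 pS qS unfolding W_def by auto
  have Wbd: "bdd_below W" unfolding W_def bdd_below_def using wl_nonneg by auto
  have "Inf W \<le> t * dist p q" using sp2 pS qS unfolding graph_dist_def W_def by auto
  then have "Inf W < dist a b" using lt by linarith
  then obtain xs where w: "walk G xs p q" and wl: "walk_length xs < dist a b"
    using cInf_less_iff[OF Wne Wbd] unfolding W_def by auto
  define T0 where "T0 = T - {(a,b),(b,a)}"
  have sT0: "sym T0" unfolding T0_def using sT by (rule sym_minus)
  have np0: "(p,q) \<notin> T0\<^sup>*" using np unfolding T0_def .
  have "\<exists>c d. (c,d) \<in> set (prs xs) \<and> (p,c) \<in> T0\<^sup>* \<and> (p,d) \<notin> T0\<^sup>*"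
    using cross[of xs "\<lambda>z. (p,z) \<in> T0\<^sup>*"] w np0 by (auto simp: walk_prs)
  then obtain c d where cd: "(c,d) \<in> set (prs xs)" and pc: "(p,c) \<in> T0\<^sup>*" and pd: "(p,d) \<notin> T0\<^sup>*"
    by blast
  have cdG: "(c,d) \<in> G" using cd w by (auto simp: walk_prs)
  have dcG: "(d,c) \<in> G" using sG cdG by (simp add: symD)
  have cdlt: "dist c d < dist a b" using pair_le_wl[OF cd] wl by linarith
  have cdne: "c \<noteq> d" using irr cdG by auto
  have abne: "a \<noteq> b" using irr abT TG by auto
  define T' where "T' = T0 \<union> {(c,d),(d,c)}"
  have T0T: "T0 \<subseteq> T" unfolding T0_def by auto
  have T'G: "T' \<subseteq> G" unfolding T'_def using T0T TG cdG dcG by auto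
  have T'S: "T' \<subseteq> S \<times> S" using T'G GS by auto
  have sT': "sym T'" using sT0 unfolding T'_def sym_def by blast
  have finSS: "finite (S \<times> S)" using fin by simp
  have finT': "finite T'" using finite_subset[OF T'S finSS] .
  have finT: "finite T" using finite_subset[OF TS finSS] .
  have finT0: "finite T0" using finite_subset[OF T0T finT] .
  have sub0: "T0\<^sup>* \<subseteq> T'\<^sup>*" by (rule rtrancl_mono) (auto simp: T'_def)
  have "(c,d) \<in> T'" unfolding T'_def by auto
  then have pdT': "(p,d) \<in> T'\<^sup>*" using subsetD[OF sub0 pc] by (meson rtrancl_into_rtrancl)
  have R: "\<And>u z. (u,z) \<in> T\<^sup>* \<Longrightarrow> (u,z) \<in> T0\<^sup>* \<or> (a,z) \<in> T0\<^sup>* \<or> (b,z) \<in> T0\<^sup>*"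
    unfolding T0_def by (rule reachR)
  have qp: "(q,p) \<in> T\<^sup>*" using cT' pS qS by blast
  have dS: "d \<in> S" using cdG GS by auto
  have pd': "(p,d) \<in> T\<^sup>*" using cT' pS dS by blast
  have nqp: "(q,p) \<notin> T0\<^sup>*" using np0 sym_rt[OF sT0] by blast
  have sym0: "\<And>x y. (x,y) \<in> T0\<^sup>* \<Longrightarrow> (y,x) \<in> T0\<^sup>*" using sym_rt[OF sT0] .
  have ab: "(p,a) \<in> T'\<^sup>* \<and> (p,b) \<in> T'\<^sup>*"
  proof -
    from R[OF qp] nqp have 1: "(a,p) \<in> T0\<^sup>* \<or> (b,p) \<in> T0\<^sup>*" by blast
    from R[OF pd'] pd have 2: "(a,d) \<in> T0\<^sup>* \<or> (b,d) \<in> T0\<^sup>*" by blast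
    show ?thesis
    proof (cases "(a,p) \<in> T0\<^sup>*")
      case True
      then have pa: "(p,a) \<in> T0\<^sup>*" by (rule sym0)
      have "(a,d) \<notin> T0\<^sup>*" using pa pd by (meson rtrancl_trans)
      then have "(d,b) \<in> T0\<^sup>*" using 2 sym0 by blast
      then show ?thesis using pa pdT' sub0 by (meson rtrancl_trans subsetD)
    next
      case False
      then have pb: "(p,b) \<in> T0\<^sup>*" using 1 sym0 by blast
      have "(b,d) \<notin> T0\<^sup>*" using pb pd by (meson rtrancl_trans)
      then have "(d,a) \<in> T0\<^sup>*" using 2 sym0 by blast
      then show ?thesis using pb pdT' sub0 by (meson rtrancl_trans subsetD)
    qed
  qed
  have allz: "\<forall>z\<in>S. (p,z) \<in> T'\<^sup>*"
  proof
    fix z assume "z \<in> S"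
    then have "(p,z) \<in> T\<^sup>*" using cT' pS by blast
    then have "(p,z) \<in> T0\<^sup>* \<or> (a,z) \<in> T0\<^sup>* \<or> (b,z) \<in> T0\<^sup>*" by (rule R)
    then show "(p,z) \<in> T'\<^sup>*" using ab sub0 by (meson rtrancl_trans subsetD)
  qed
  have "\<forall>u\<in>S. \<forall>v\<in>S. (u,v) \<in> T'\<^sup>*"
    using allz sym_rt[OF sT'] by (meson rtrancl_trans)
  then have conn': "connected_on S T'" using conn_iff[OF T'S] by simp
  obtain H' where H'T': "H' \<subseteq> T'" and stH': "spanning_tree S G H'"
    using exists_st[OF finT' T'G T'S sT' conn'] by blast
  have tle: "total_weight T \<le> total_weight H'" using minw stH' by blast
  define f :: "'a \<times> 'a \<Rightarrow> real" where "f = (\<lambda>(u,v). dist u v)"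
  have tw: "\<And>X. total_weight X = sum f X / 2" by (simp add: total_weight_def f_def)
  have fnn: "\<And>e. f e \<ge> 0" by (auto simp: f_def split: prod.splits)
  have h1: "sum f H' \<le> sum f T'" by (rule sum_mono2[OF finT' H'T']) (simp add: fnn)
  have "sum f T' = sum f T0 + sum f {(c,d),(d,c)} - sum f (T0 \<inter> {(c,d),(d,c)})"
    unfolding T'_def by (rule sum_Un) (use finT0 in auto)
  moreover have "sum f (T0 \<inter> {(c,d),(d,c)}) \<ge> 0" by (rule sum_nonneg) (simp add: fnn)
  ultimately have h2: "sum f T' \<le> sum f T0 + sum f {(c,d),(d,c)}" by linarith
  have h3: "sum f {(c,d),(d,c)} = 2 * dist c d" using cdne by (simp add: f_def dist_commute)
  have "{(a,b),(b,a)} \<subseteq> T" using abT sT by (auto simp: sym_def)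
  then have h4: "sum f T = sum f T0 + sum f {(a,b),(b,a)}" unfolding T0_def
    by (rule sum.subset_diff[OF _ finT])
  have h5: "sum f {(a,b),(b,a)} = 2 * dist a b" using abne by (simp add: f_def dist_commute)
  have "sum f T \<le> sum f H'" using tle by (simp add: tw)
  then show False using h1 h2 h3 h4 h5 cdlt by linarith
qed

lemma side:
  assumes sT: "sym T" and ac: "\<not> has_cycle T" and dg: "distinct \<gamma>" and gne: "\<gamma> \<noteq> []"
    and hg: "hd \<gamma> = p" and lg: "last \<gamma> = q" and gT: "set (prs \<gamma>) \<subseteq> T" and zg: "z \<in> set \<gamma>"
    and dpi: "distinct \<pi>" and pne: "\<pi> \<noteq> []" and pT: "set (prs \<pi>) \<subseteq> T"
    and hp: "hd \<pi> = w" and lp: "last \<pi> = z" and wpq: "w = p \<or> w = q"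
    and abp: "(a,b) \<in> set (prs \<pi>)"
  shows "(p,q) \<notin> (T - {(a,b),(b,a)})\<^sup>*"
proof
  define T0 where "T0 = T - {(a,b),(b,a)}"
  assume pq: "(p,q) \<in> (T - {(a,b),(b,a)})\<^sup>*"
  then have pq0: "(p,q) \<in> T0\<^sup>*" unfolding T0_def .
  have sT0: "sym T0" unfolding T0_def using sT by (rule sym_minus)
  have wz: "(w,z) \<notin> T0\<^sup>*" using keyL[OF sT ac dpi pT pne abp] hp lp unfolding T0_def by simp
  show False
  proof (cases "(a,b) \<in> set (prs \<gamma>) \<or> (b,a) \<in> set (prs \<gamma>)")
    case True
    then show False
    proof
      assume "(a,b) \<in> set (prs \<gamma>)"
      from keyL[OF sT ac dg gT gne this] pq hg lg show False by simp
    next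
      assume "(b,a) \<in> set (prs \<gamma>)"
      from keyL[OF sT ac dg gT gne this] pq hg lg show False by (simp add: insert_commute)
    qed
  next
    case False
    then have "set (prs \<gamma>) \<subseteq> T0" using gT unfolding T0_def by auto
    then have pz: "(p,z) \<in> T0\<^sup>*" using prs_rtrancl[of \<gamma> T0 z] zg hg by simp
    have qp: "(q,p) \<in> T0\<^sup>*" using sym_rt[OF sT0 pq0] .
    have "(q,z) \<in> T0\<^sup>*" using rtrancl_trans[OF qp pz] .
    then show False using wz wpq \<open>(p,z) \<in> T0\<^sup>*\<close> by blast
  qed
qed

lemma side_bound:
  fixes S :: "'a::euclidean_space set"
  assumes fin: "finite S" and sp: "t_spanner t S G" and mst: "minimum_spanning_tree S G T"
    and t1: "t \<ge> 1" and m1: "1 \<le> m"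
    and VS: "V \<subseteq> S" and sub: "subtree_of T V E" and cV: "card V \<le> m"
    and pS: "p \<in> S" and qS: "q \<in> S"
    and gam: "path_in T \<gamma> p q"
    and wV: "w \<in> V" and wpq: "w = p \<or> w = q" and zV: "z \<in> V" and zg: "z \<in> set \<gamma>"
  shows "dist w z \<le> (real m - 1) * (t * dist p q)"
proof -
  from sp have GS: "G \<subseteq> S \<times> S" unfolding t_spanner_def geom_graph_def by auto
  from mst have TG: "T \<subseteq> G" and sT: "sym T" and ac: "\<not> has_cycle T"
    unfolding minimum_spanning_tree_def spanning_tree_def by auto
  from sub have ET: "E \<subseteq> T" and cE: "connected_on V E" unfolding subtree_of_def by auto
  have "\<exists>xs. walk E xs w z \<and> set xs \<subseteq> V" using cE wV zV unfolding connected_on_def by blast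
  then obtain xs where xs: "walk E xs w z \<and> set xs \<subseteq> V" ..
  have xsV: "set xs \<subseteq> V" using xs by (rule conjunct2)
  from walk_distinct[OF conjunct1[OF xs]]
  obtain \<pi> where pi: "walk E \<pi> w z \<and> distinct \<pi> \<and> set \<pi> \<subseteq> set xs" ..
  have wp: "walk E \<pi> w z" and dpi: "distinct \<pi>" and pxs: "set \<pi> \<subseteq> set xs" using pi by simp_all
  have piV: "set \<pi> \<subseteq> V" using pxs xsV by blast
  have pne: "\<pi> \<noteq> []" and hp: "hd \<pi> = w" and lp: "last \<pi> = z" and pE: "set (prs \<pi>) \<subseteq> E"
    using wp unfolding walk_prs by auto
  have pT: "set (prs \<pi>) \<subseteq> T" using pE ET by blast
  from gam have gne: "\<gamma> \<noteq> []" and hg: "hd \<gamma> = p" and lg: "last \<gamma> = q" and gT: "set (prs \<gamma>) \<subseteq> T"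
    and dg: "distinct \<gamma>" unfolding path_in_def walk_prs by auto
  have M: "\<And>a b. (a,b) \<in> set (prs \<pi>) \<Longrightarrow> dist a b \<le> t * dist p q"
  proof -
    fix a b assume abp: "(a,b) \<in> set (prs \<pi>)"
    have np: "(p,q) \<notin> (T - {(a,b),(b,a)})\<^sup>*"
      by (rule side[OF sT ac dg gne hg lg gT zg dpi pne pT hp lp wpq abp])
    have "(a,b) \<in> T" using abp pT by blast
    then show "dist a b \<le> t * dist p q" by (rule cut[OF fin sp mst _ pS qS np])
  qed
  have "dist w z \<le> walk_length \<pi>" using dist_le_wl[OF pne] hp lp by simp
  also have "\<dots> \<le> real (length \<pi> - 1) * (t * dist p q)" using wl_bound[of \<pi> "t * dist p q", OF M] .
  also have "\<dots> \<le> (real m - 1) * (t * dist p q)"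
  proof (rule mult_right_mono)
    have "finite V" using VS fin finite_subset by blast
    then have "card (set \<pi>) \<le> card V" using piV card_mono by blast
    then have "length \<pi> \<le> m" using distinct_card[OF dpi] cV by linarith
    then show "real (length \<pi> - 1) \<le> real m - 1" using pne by (cases \<pi>) auto
    show "0 \<le> t * dist p q" using t1 by simp
  qed
  finally show ?thesis .
qed

theorem lemma6:
  fixes S :: "'a::euclidean_space set" and G T E1 E2 :: "('a \<times> 'a) set"
    and V1 V2 :: "'a set" and t :: real and n m :: nat
    and p q x y :: 'a and \<gamma> :: "'a list"
  assumes "finite S" and "card S = n"
    and "t \<ge> 1"
    and "t_spanner t S G"
    and "minimum_spanning_tree S G T"
    and "1 \<le> m" and "m \<le> n - 1"
    and "V1 \<subseteq> S" and "V2 \<subseteq> S"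
    and "subtree_of T V1 E1" and "subtree_of T V2 E2"
    and "V1 \<inter> V2 = {}"
    and "card V1 \<le> m" and "card V2 \<le> m"
    and "p \<in> V1" and "q \<in> V2"
    and "path_in T \<gamma> p q"
    and "x \<in> V1" and "x \<in> set \<gamma>"
    and "y \<in> V2" and "y \<in> set \<gamma>"
  shows "dist x y \<le> (2 * t * (real m - 1) + 1) * dist p q"
proof -
  have pS: "p \<in> S" and qS: "q \<in> S" using assms(8,9,15,16) by auto
  have 1: "dist p x \<le> (real m - 1) * (t * dist p q)"
    by (rule side_bound[OF assms(1,4,5,3,6,8,10,13) pS qS assms(17,15) _ assms(18,19)]) simp
  have 2: "dist q y \<le> (real m - 1) * (t * dist p q)"
    by (rule side_bound[OF assms(1,4,5,3,6,9,11,14) pS qS assms(17,16) _ assms(20,21)]) simp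
  have "dist x y \<le> dist x p + dist p q + dist q y"
  proof -
    have "dist x y \<le> dist x p + dist p y" by (rule dist_triangle)
    moreover have "dist p y \<le> dist p q + dist q y" by (rule dist_triangle)
    ultimately show ?thesis by linarith
  qed
  also have "\<dots> \<le> (real m - 1) * (t * dist p q) + dist p q + (real m - 1) * (t * dist p q)"
    using 1 2 dist_commute[of x p] by linarith
  also have "\<dots> = (2 * t * (real m - 1) + 1) * dist p q" by (simp add: algebra_simps)
  finally show ?thesis .
qed

end
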